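(* Every critical model (of degree $2$, $3$ or $4$) is insoluble over $K$, i.e. the curve it defines has no $K$-rational point.
   Context: $K$ is a field with normalised discrete valuation $v$, valuation ring $\mathcal{O}_K$, uniformiser $\pi$, perfect residue field $k$. Critical models: (a) A generalised binary quartic $y^2+(lx^2+mxz+nz^2)y=ax^4+bx^3z+cx^2z^2+dxz^3+ez^4$ with coefficients in $\mathcal{O}_K$ is critical if $v(l)\ge1$, $v(m)\ge1$, $v(n)\ge2$, $v(a)=1$, $v(b)\ge2$, $v(c)\ge2$, $v(d)\ge3$, $v(e)=3$; its curve lies in the weighted projective plane $\mathbb{P}(1,1,2)$ with coordinates $x,z,y$. (b) A ternary cubic $F\in\mathcal{O}_K[x,y,z]$ is critical if its coefficients satisfy: $v(x^3)=0$, $v(x^2y)\ge1$, $v(xy^2)\ge1$, $v(y^3)=1$, $v(x^2z)\ge1$, $v(xyz)\ge1$, $v(y^2z)\ge2$, $v(xz^2)\ge2$, $v(yz^2)\ge2$, $v(z^3)=2$ (where $v(\text{monomial})$ denotes the valuation of its coefficient); its curve is $\{F=0\}\subset\mathbb{P}^2$. (c) A pair $(Q_1,Q_2)$ of quadratic forms in $x_1,\dots,x_4$ over $\mathcal{O}_K$ is critical if the reductions of $Q_1,Q_2$ mod $\pi$ are quadratic forms in $x_1,x_2$ only with no common root in $\mathbb{P}^1(\overline{k})$, and, putting $R_i(x_1,\dots,x_4)=\pi^{-1}Q_i(\pi x_1,\pi x_2,x_3,x_4)$, the reductions of $R_1,R_2$ mod $\pi$ are quadratic forms in $x_3,x_4$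 only with no common root in $\mathbb{P}^1(\overline{k})$; its curve is $\{Q_1=Q_2=0\}\subset\mathbb{P}^3$. *)

theory Defs
  imports Main "HOL-Computational_Algebra.Polynomial" "HOL-Computational_Algebra.Primes"
begin

text \<open>A valuation is a map v :: 'a => int; its value at 0 is irrelevant (0 has valuation
 infinity).  vge v x n means v(x) >= n (true for x = 0), veq v x n means v(x) = n.\<close>

definition vge :: "('a::field \<Rightarrow> int) \<Rightarrow> 'a \<Rightarrow> int \<Rightarrow> bool" where
  "vge v x n \<longleftrightarrow> x = 0 \<or> n \<le> v x"

definition veq :: "('a::field \<Rightarrow> int) \<Rightarrow> 'a \<Rightarrow> int \<Rightarrow> bool" where
  "veq v x n \<longleftrightarrow> x \<noteq> 0 \<and> v x = n"

definition normalised_dval :: "('a::field \<Rightarrow> int) \<Rightarrow> bool" where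
  "normalised_dval v \<longleftrightarrow>
     (\<forall>x y. x \<noteq> 0 \<longrightarrow> y \<noteq> 0 \<longrightarrow> v (x * y) = v x + v y) \<and>
     (\<forall>x y. x \<noteq> 0 \<longrightarrow> y \<noteq> 0 \<longrightarrow> x + y \<noteq> 0 \<longrightarrow> min (v x) (v y) \<le> v (x + y)) \<and>
     (\<exists>p. p \<noteq> 0 \<and> v p = 1)"

text \<open>The residue field O_K / (\<pi>) is perfect: if its characteristic is a prime p
 then every residue class is a p-th power.\<close>
definition perfect_residue_field :: "('a::field \<Rightarrow> int) \<Rightarrow> bool" where
  "perfect_residue_field v \<longleftrightarrow>
     (\<forall>p::nat. prime p \<longrightarrow> vge v (of_nat p) 1 \<longrightarrow>
        (\<forall>x. vge v x 0 \<longrightarrow> (\<exists>y. vge v y 0 \<and> vge v (x - y ^ p) 1)))"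

text \<open>It identifies the residue field k with a subfield
 of k', so k' contains an algebraic closure of k.\<close>
definition residue_embedding :: "('a::field \<Rightarrow> int) \<Rightarrow> ('a \<Rightarrow> 'k::alg_closed_field) \<Rightarrow> bool" where
  "residue_embedding v red \<longleftrightarrow>
     red 1 = 1 \<and>
     (\<forall>x y. vge v x 0 \<longrightarrow> vge v y 0 \<longrightarrow> red (x + y) = red x + red y) \<and>
     (\<forall>x y. vge v x 0 \<longrightarrow> vge v y 0 \<longrightarrow> red (x * y) = red x * red y) \<and>
     (\<forall>x. vge v x 0 \<longrightarrow> (red x = 0 \<longleftrightarrow> vge v x 1))"

definition critical_gbq ::
  "('a::field \<Rightarrow> int) \<Rightarrow> 'a \<Rightarrow> 'a \<Rightarrow> 'a \<Rightarrow> 'a \<Rightarrow> 'a \<Rightarrow> 'a \<Rightarrow> 'a \<Rightarrow> 'a \<Rightarrow> bool" where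
  "critical_gbq v l m n a b c d e \<longleftrightarrow>
     vge v l 1 \<and> vge v m 1 \<and> vge v n 2 \<and> veq v a 1 \<and> vge v b 2 \<and> vge v c 2 \<and>
     vge v d 3 \<and> veq v e 3"

text \<open>K-rational point of the curve in P(1,1,2) (coordinates x,z,y): a nonzero solution.\<close>
definition gbq_soluble :: "'a::field \<Rightarrow> 'a \<Rightarrow> 'a \<Rightarrow> 'a \<Rightarrow> 'a \<Rightarrow> 'a \<Rightarrow> 'a \<Rightarrow> 'a \<Rightarrow> bool" where
  "gbq_soluble l m n a b c d e \<longleftrightarrow>
     (\<exists>x z y. (x, z, y) \<noteq> (0, 0, 0) \<and>
        y^2 + (l*x^2 + m*x*z + n*z^2) * y =
        a*x^4 + b*x^3*z + c*x^2*z^2 + d*x*z^3 + e*z^4)"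

definition tcubic_eval :: "(nat \<Rightarrow> nat \<Rightarrow> nat \<Rightarrow> 'a::field) \<Rightarrow> 'a \<Rightarrow> 'a \<Rightarrow> 'a \<Rightarrow> 'a" where
  "tcubic_eval F x y z = (\<Sum>i\<le>3. \<Sum>j\<le>3 - i. F i j (3 - i - j) * x^i * y^j * z^(3 - i - j))"

definition critical_tcubic :: "('a::field \<Rightarrow> int) \<Rightarrow> (nat \<Rightarrow> nat \<Rightarrow> nat \<Rightarrow> 'a) \<Rightarrow> bool" where
  "critical_tcubic v F \<longleftrightarrow>
     veq v (F 3 0 0) 0 \<and> vge v (F 2 1 0) 1 \<and> vge v (F 1 2 0) 1 \<and> veq v (F 0 3 0) 1 \<and>
     vge v (F 2 0 1) 1 \<and> vge v (F 1 1 1) 1 \<and> vge v (F 0 2 1) 2 \<and> vge v (F 1 0 2) 2 \<and>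
     vge v (F 0 1 2) 2 \<and> veq v (F 0 0 3) 2"

definition tcubic_soluble :: "(nat \<Rightarrow> nat \<Rightarrow> nat \<Rightarrow> 'a::field) \<Rightarrow> bool" where
  "tcubic_soluble F \<longleftrightarrow> (\<exists>x y z. (x, y, z) \<noteq> (0, 0, 0) \<and> tcubic_eval F x y z = 0)"

definition qform_eval :: "(nat \<Rightarrow> nat \<Rightarrow> 'a::field) \<Rightarrow> (nat \<Rightarrow> 'a) \<Rightarrow> 'a" where
  "qform_eval Q x = (\<Sum>i\<in>{1..4}. \<Sum>j\<in>{i..4}. Q i j * x i * x j)"

definition no_common_root :: "'k::field \<Rightarrow> 'k \<Rightarrow> 'k \<Rightarrow> 'k \<Rightarrow> 'k \<Rightarrow> 'k \<Rightarrow> bool" where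
  "no_common_root a1 b1 c1 a2 b2 c2 \<longleftrightarrow>
     \<not> (\<exists>s t. (s, t) \<noteq> (0, 0) \<and>
            a1*s^2 + b1*s*t + c1*t^2 = 0 \<and> a2*s^2 + b2*s*t + c2*t^2 = 0)"

text \<open>R(x) = \<pi>^-1 Q(\<pi> x1, \<pi> x2, x3, x4), as a coefficient function.\<close>
definition qform_R :: "'a::field \<Rightarrow> (nat \<Rightarrow> nat \<Rightarrow> 'a) \<Rightarrow> nat \<Rightarrow> nat \<Rightarrow> 'a" where
  "qform_R \<pi> Q i j = Q i j * \<pi> ^ ((if i \<le> 2 then 1 else 0) + (if j \<le> 2 then 1 else 0)) / \<pi>"

definition critical_qpair ::
  "('a::field \<Rightarrow> int) \<Rightarrow> 'a \<Rightarrow> ('a \<Rightarrow> 'k::alg_closed_field) \<Rightarrow>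
   (nat \<Rightarrow> nat \<Rightarrow> 'a) \<Rightarrow> (nat \<Rightarrow> nat \<Rightarrow> 'a) \<Rightarrow> bool" where
  "critical_qpair v \<pi> red Q1 Q2 \<longleftrightarrow>
     \<comment> \<open>coefficients in O_K\<close>
     (\<forall>i\<in>{1..4}. \<forall>j\<in>{i..4}. vge v (Q1 i j) 0 \<and> vge v (Q2 i j) 0) \<and>
     \<comment> \<open>reductions of Q1, Q2 are forms in x1, x2 only\<close>
     (\<forall>i\<in>{1..4}. \<forall>j\<in>{i..4}. 3 \<le> j \<longrightarrow> vge v (Q1 i j) 1 \<and> vge v (Q2 i j) 1) \<and>
     no_common_root (red (Q1 1 1)) (red (Q1 1 2)) (red (Q1 2 2))
                    (red (Q2 1 1)) (red (Q2 1 2)) (red (Q2 2 2)) \<and>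
     \<comment> \<open>R1, R2 have coefficients in O_K and reductions are forms in x3, x4 only\<close>
     (\<forall>i\<in>{1..4}. \<forall>j\<in>{i..4}. vge v (qform_R \<pi> Q1 i j) 0 \<and> vge v (qform_R \<pi> Q2 i j) 0) \<and>
     (\<forall>i\<in>{1..4}. \<forall>j\<in>{i..4}. i \<le> 2 \<longrightarrow>
         vge v (qform_R \<pi> Q1 i j) 1 \<and> vge v (qform_R \<pi> Q2 i j) 1) \<and>
     no_common_root (red (qform_R \<pi> Q1 3 3)) (red (qform_R \<pi> Q1 3 4)) (red (qform_R \<pi> Q1 4 4))
                    (red (qform_R \<pi> Q2 3 3)) (red (qform_R \<pi> Q2 3 4)) (red (qform_R \<pi> Q2 4 4))"

definition qpair_soluble :: "(nat \<Rightarrow> nat \<Rightarrow> 'a::field) \<Rightarrow> (nat \<Rightarrow> nat \<Rightarrow> 'a) \<Rightarrow> bool" where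
  "qpair_soluble Q1 Q2 \<longleftrightarrow>
     (\<exists>x. (\<exists>i\<in>{1..4}. x i \<noteq> 0) \<and> qform_eval Q1 x = 0 \<and> qform_eval Q2 x = 0)"

end

theory Submission
  imports Defs
begin

lemma nd_mult: "normalised_dval v \<Longrightarrow> x \<noteq> 0 \<Longrightarrow> y \<noteq> 0 \<Longrightarrow> v (x*y) = v x + v y"
  unfolding normalised_dval_def by blast
lemma nd_add: "normalised_dval v \<Longrightarrow> x \<noteq> 0 \<Longrightarrow> y \<noteq> 0 \<Longrightarrow> x + y \<noteq> 0 \<Longrightarrow> min (v x) (v y) \<le> v (x+y)"
  unfolding normalised_dval_def by blast
lemma nd_one: "normalised_dval v \<Longrightarrow> v 1 = 0"
  using nd_mult[of v 1 1] by simp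
lemma nd_m1: "normalised_dval v \<Longrightarrow> v (-1) = 0"
  using nd_mult[of v "-1" "-1"] nd_one[of v] by simp
lemma nd_uminus: "normalised_dval v \<Longrightarrow> x \<noteq> 0 \<Longrightarrow> v (-x) = v x"
  using nd_mult[of v "-1" x] nd_m1[of v] by simp
lemma nd_pow: "normalised_dval v \<Longrightarrow> x \<noteq> 0 \<Longrightarrow> v (x^k) = int k * v x"
  by (induction k) (simp_all add: nd_one nd_mult algebra_simps)

lemma vge_add: "normalised_dval v \<Longrightarrow> vge v a n \<Longrightarrow> vge v b n \<Longrightarrow> vge v (a+b) n"
  unfolding vge_def using nd_add[of v a b] by fastforce
lemma vge_uminus: "normalised_dval v \<Longrightarrow> vge v a n \<Longrightarrow> vge v (-a) n"
  unfolding vge_def using nd_uminus[of v a] by (cases "a = 0") auto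
lemma vge_diff: "normalised_dval v \<Longrightarrow> vge v a n \<Longrightarrow> vge v b n \<Longrightarrow> vge v (a-b) n"
  using vge_add[of v a n "-b"] vge_uminus[of v b n] by simp
lemma vge_mult: "normalised_dval v \<Longrightarrow> vge v a p \<Longrightarrow> vge v b q \<Longrightarrow> vge v (a*b) (p+q)"
  unfolding vge_def using nd_mult[of v a b] by (cases "a = 0"; cases "b = 0") auto
lemma vge_mono: "vge v a p \<Longrightarrow> q \<le> p \<Longrightarrow> vge v a q"
  unfolding vge_def by auto
lemma vge_pow: "normalised_dval v \<Longrightarrow> vge v a p \<Longrightarrow> vge v (a^k) (int k * p)"
  unfolding vge_def using nd_pow[of v a k] nd_one[of v]
  by (cases "a = 0"; cases "k = 0") (auto simp: mult_left_mono)
lemma vge_self: "vge v a (v a)"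
  unfolding vge_def by auto
lemma veq_vge: "veq v a n \<Longrightarrow> vge v a n"
  unfolding vge_def veq_def by auto

lemma dominant: "normalised_dval v \<Longrightarrow> t \<noteq> 0 \<Longrightarrow> vge v r (v t + 1) \<Longrightarrow> t + r = 0 \<Longrightarrow> False"
proof -
  assume nd: "normalised_dval v" and t: "t \<noteq> 0" and r: "vge v r (v t + 1)" and s: "t + r = 0"
  then have "r = -t" by (simp add: add_eq_0_iff2)
  then show False using r t nd_uminus[OF nd t] unfolding vge_def by auto
qed

lemma part_a:
  fixes v :: "'a::field \<Rightarrow> int"
  assumes nd: "normalised_dval v" and crit: "critical_gbq v l m n a b c d e"
  and eq: "y^2 + (l*x^2 + m*x*z + n*z^2) * y = a*x^4 + b*x^3*z + c*x^2*z^2 + d*x*z^3 + e*z^4"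
  and nz: "(x,z,y) \<noteq> (0,0,0)"
  shows False
proof -
  from crit have hl: "vge v l 1" and hm: "vge v m 1" and hn: "vge v n 2" and ha: "veq v a 1"
    and hb: "vge v b 2" and hc: "vge v c 2" and hd: "vge v d 3" and he: "veq v e 3"
    unfolding critical_gbq_def by auto
  have ha': "vge v a 1" and he': "vge v e 3" using ha he by (auto intro: veq_vge)
  have a0: "a \<noteq> 0" "v a = 1" and e0: "e \<noteq> 0" "v e = 3" using ha he unfolding veq_def by auto
  note vr = vge_add[OF nd] vge_diff[OF nd] vge_mult[OF nd] vge_pow[OF nd]
  let ?L = "l*x^2 + m*x*z + n*z^2"
  have eq1: "y^2 + (?L * y - (a*x^4 + b*x^3*z + c*x^2*z^2 + d*x*z^3 + e*z^4)) = 0"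
    using eq by (simp add: algebra_simps)
  have eq2: "a*x^4 + (b*x^3*z + c*x^2*z^2 + d*x*z^3 + e*z^4 - y^2 - ?L * y) = 0"
    using eq by (simp add: algebra_simps)
  have eq3: "e*z^4 + (a*x^4 + b*x^3*z + c*x^2*z^2 + d*x*z^3 - y^2 - ?L * y) = 0"
    using eq by (simp add: algebra_simps)
  consider (O) "x = 0" "z = 0" | (X) "x \<noteq> 0" "vge v z (v x)" | (Z) "z \<noteq> 0" "vge v x (v z + 1)"
    unfolding vge_def by force
  then show False
  proof cases
    case O
    then have "y \<noteq> 0" using nz by auto
    then show False using eq O by simp
  next
    case X
    define X where "X = v x"
    have hx: "vge v x X" unfolding X_def by (rule vge_self)
    have hz: "vge v z X" using X X_def by simp
    have hL: "vge v ?L (1 + 2*X)"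
      by (insert hl hm hn hx hz, (intro vr(1) vr(2))?, (rule vge_mono, (assumption | rule vr(3) vr(4))+, (simp add: algebra_simps; linarith))+)
    consider (y1) "y \<noteq> 0" "v y \<le> 2*X" | (y2) "vge v y (2*X+1)" unfolding vge_def by force
    then show False
    proof cases
      case y1
      define Y where "Y = v y"
      have hy: "vge v y Y" unfolding Y_def by (rule vge_self)
      have YX: "Y \<le> 2*X" using y1 Y_def by simp
      have t: "y^2 \<noteq> 0" using y1 by simp
      have vt: "v (y^2) = 2*Y" using nd_pow[OF nd y1(1), of 2] Y_def by simp
      have r: "vge v (?L * y - (a*x^4 + b*x^3*z + c*x^2*z^2 + d*x*z^3 + e*z^4)) (v (y^2) + 1)"
        unfolding vt by (insert hL hy ha' hb hc hd he' hx hz YX, (intro vr(1) vr(2))?, (rule vge_mono, (assumption | rule vr(3) vr(4))+, (simp add: algebra_simps; linarith))+)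
      show False by (rule dominant[OF nd t r eq1])
    next
      case y2
      have t: "a*x^4 \<noteq> 0" using a0 X by simp
      have vt: "v (a*x^4) = 1 + 4*X" using nd_pow[OF nd X(1), of 4] nd_mult[OF nd a0(1), of "x^4"] X X_def a0 by simp
      have r: "vge v (b*x^3*z + c*x^2*z^2 + d*x*z^3 + e*z^4 - y^2 - ?L * y) (v (a*x^4) + 1)"
        unfolding vt by (insert hL y2 ha' hb hc hd he' hx hz, (intro vr(1) vr(2))?, (rule vge_mono, (assumption | rule vr(3) vr(4))+, (simp add: algebra_simps; linarith))+)
      show False by (rule dominant[OF nd t r eq2])
    qed
  next
    case Z
    define Z where "Z = v z"
    have hz: "vge v z Z" unfolding Z_def by (rule vge_self)
    have hx: "vge v x (Z+1)" using Z Z_def by simp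
    have hL: "vge v ?L (2 + 2*Z)"
      by (insert hl hm hn hx hz, (intro vr(1) vr(2))?, (rule vge_mono, (assumption | rule vr(3) vr(4))+, (simp add: algebra_simps; linarith))+)
    consider (y1) "y \<noteq> 0" "v y \<le> 2*Z+1" | (y2) "vge v y (2*Z+2)" unfolding vge_def by force
    then show False
    proof cases
      case y1
      define Y where "Y = v y"
      have hy: "vge v y Y" unfolding Y_def by (rule vge_self)
      have YZ: "Y \<le> 2*Z+1" using y1 Y_def by simp
      have t: "y^2 \<noteq> 0" using y1 by simp
      have vt: "v (y^2) = 2*Y" using nd_pow[OF nd y1(1), of 2] Y_def by simp
      have r: "vge v (?L * y - (a*x^4 + b*x^3*z + c*x^2*z^2 + d*x*z^3 + e*z^4)) (v (y^2) + 1)"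
        unfolding vt by (insert hL hy ha' hb hc hd he' hx hz YZ, (intro vr(1) vr(2))?, (rule vge_mono, (assumption | rule vr(3) vr(4))+, (simp add: algebra_simps; linarith))+)
      show False by (rule dominant[OF nd t r eq1])
    next
      case y2
      have t: "e*z^4 \<noteq> 0" using e0 Z by simp
      have vt: "v (e*z^4) = 3 + 4*Z" using nd_pow[OF nd Z(1), of 4] nd_mult[OF nd e0(1), of "z^4"] Z Z_def e0 by simp
      have r: "vge v (a*x^4 + b*x^3*z + c*x^2*z^2 + d*x*z^3 - y^2 - ?L * y) (v (e*z^4) + 1)"
        unfolding vt by (insert hL y2 ha' hb hc hd he' hx hz, (intro vr(1) vr(2))?, (rule vge_mono, (assumption | rule vr(3) vr(4))+, (simp add: algebra_simps; linarith))+)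
      show False by (rule dominant[OF nd t r eq3])
    qed
  qed
qed


lemma re_one: "residue_embedding v red \<Longrightarrow> red 1 = 1"
  unfolding residue_embedding_def by blast
lemma re_add: "residue_embedding v red \<Longrightarrow> vge v x 0 \<Longrightarrow> vge v y 0 \<Longrightarrow> red (x+y) = red x + red y"
  unfolding residue_embedding_def by blast
lemma re_mult: "residue_embedding v red \<Longrightarrow> vge v x 0 \<Longrightarrow> vge v y 0 \<Longrightarrow> red (x*y) = red x * red y"
  unfolding residue_embedding_def by blast
lemma re_zero: "residue_embedding v red \<Longrightarrow> vge v x 0 \<Longrightarrow> red x = 0 \<longleftrightarrow> vge v x 1"
  unfolding residue_embedding_def by blast
lemma re_0: "residue_embedding v red \<Longrightarrow> red 0 = 0"
  using re_zero[of v red 0] unfolding vge_def by simp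

lemma vge0_mult: "normalised_dval v \<Longrightarrow> vge v a 0 \<Longrightarrow> vge v b 0 \<Longrightarrow> vge v (a*b) 0"
  using vge_mult[of v a 0 b 0] by simp

lemma red_qf:
  assumes nd: "normalised_dval v" and re: "residue_embedding v red"
    and h: "vge v a 0" "vge v b 0" "vge v c 0" "vge v s 0" "vge v t 0"
  shows "vge v (a*s^2 + b*s*t + c*t^2) 0 \<and>
    red (a*s^2 + b*s*t + c*t^2) = red a * (red s)^2 + red b * red s * red t + red c * (red t)^2"
proof -
  note m = vge0_mult[OF nd]
  have 1: "vge v (s^2) 0" "vge v (t^2) 0" using m h by (auto simp: power2_eq_square)
  have 2: "vge v (a*s^2) 0" "vge v (b*s) 0" "vge v (b*s*t) 0" "vge v (c*t^2) 0" using m h 1 by auto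
  have 3: "vge v (a*s^2 + b*s*t) 0" using vge_add[OF nd 2(1) 2(3)] .
  have 4: "vge v (a*s^2 + b*s*t + c*t^2) 0" using vge_add[OF nd 3 2(4)] .
  have "red (a*s^2 + b*s*t + c*t^2) = red (a*s^2) + red (b*s*t) + red (c*t^2)"
    using re_add[OF re 3 2(4)] re_add[OF re 2(1) 2(3)] by simp
  also have "\<dots> = red a * (red s)^2 + red b * red s * red t + red c * (red t)^2"
    using re_mult[OF re h(1) 1(1)] re_mult[OF re 2(2) h(5)] re_mult[OF re h(2) h(4)]
      re_mult[OF re h(3) 1(2)] re_mult[OF re h(4) h(4)] re_mult[OF re h(5) h(5)]
    by (simp add: power2_eq_square)
  finally show ?thesis using 4 by simp
qed

lemma bin_lemma:
  assumes nd: "normalised_dval v" and re: "residue_embedding v red"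
   and int: "vge v a1 0" "vge v b1 0" "vge v c1 0" "vge v a2 0" "vge v b2 0" "vge v c2 0"
   and ncr: "no_common_root (red a1) (red b1) (red c1) (red a2) (red b2) (red c2)"
   and u: "u \<noteq> 0" "u = s \<or> u = t" "vge v s (v u)" "vge v t (v u)"
  shows "(a1*s^2 + b1*s*t + c1*t^2 \<noteq> 0 \<and> v (a1*s^2 + b1*s*t + c1*t^2) = 2 * v u) \<or>
         (a2*s^2 + b2*s*t + c2*t^2 \<noteq> 0 \<and> v (a2*s^2 + b2*s*t + c2*t^2) = 2 * v u)"
proof -
  define s' t' where "s' = s/u" and "t' = t/u"
  have s: "s = s' * u" and t: "t = t' * u" using u(1) unfolding s'_def t'_def by auto
  have hs: "vge v s' 0"
  proof (cases "s' = 0")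
    case False
    then have "s \<noteq> 0" using s u(1) by simp
    then have "v s = v s' + v u" using nd_mult[OF nd False u(1)] s by simp
    then show ?thesis using u(3) \<open>s \<noteq> 0\<close> unfolding vge_def by simp
  qed (simp add: vge_def)
  have ht: "vge v t' 0"
  proof (cases "t' = 0")
    case False
    then have "t \<noteq> 0" using t u(1) by simp
    then have "v t = v t' + v u" using nd_mult[OF nd False u(1)] t by simp
    then show ?thesis using u(4) \<open>t \<noteq> 0\<close> unfolding vge_def by simp
  qed (simp add: vge_def)
  have st1: "s' = 1 \<or> t' = 1" using u(1,2) unfolding s'_def t'_def by auto
  have rst: "(red s', red t') \<noteq> (0, 0)" using st1 re_one[OF re] by auto
  have q1: "vge v (a1*s'^2 + b1*s'*t' + c1*t'^2) 0"
     "red (a1*s'^2 + b1*s'*t' + c1*t'^2) = red a1 * (red s')^2 + red b1 * red s' * red t' + red c1 * (red t')^2"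
    using red_qf[OF nd re int(1,2,3) hs ht] by auto
  have q2: "vge v (a2*s'^2 + b2*s'*t' + c2*t'^2) 0"
     "red (a2*s'^2 + b2*s'*t' + c2*t'^2) = red a2 * (red s')^2 + red b2 * red s' * red t' + red c2 * (red t')^2"
    using red_qf[OF nd re int(4,5,6) hs ht] by auto
  have key: "\<And>a b c. vge v (a*s'^2 + b*s'*t' + c*t'^2) 0 \<Longrightarrow> red (a*s'^2 + b*s'*t' + c*t'^2) \<noteq> 0 \<Longrightarrow>
      (a*s^2 + b*s*t + c*t^2 \<noteq> 0 \<and> v (a*s^2 + b*s*t + c*t^2) = 2 * v u)"
  proof -
    fix a b c
    let ?q = "a*s'^2 + b*s'*t' + c*t'^2"
    assume i: "vge v ?q 0" and r: "red ?q \<noteq> 0"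
    have q0: "?q \<noteq> 0" using r re_0[OF re] by auto
    have "\<not> vge v ?q 1" using re_zero[OF re i] r by simp
    then have vq: "v ?q = 0" using i q0 unfolding vge_def by simp
    have e: "a*s^2 + b*s*t + c*t^2 = u^2 * ?q" unfolding s t by (simp add: algebra_simps power2_eq_square)
    have "v (u^2 * ?q) = 2 * v u" using nd_mult[OF nd _ q0, of "u^2"] nd_pow[OF nd u(1), of 2] u(1) vq by simp
    then show "a*s^2 + b*s*t + c*t^2 \<noteq> 0 \<and> v (a*s^2 + b*s*t + c*t^2) = 2 * v u"
      using e q0 u(1) by simp
  qed
  have "red (a1*s'^2 + b1*s'*t' + c1*t'^2) \<noteq> 0 \<or> red (a2*s'^2 + b2*s'*t' + c2*t'^2) \<noteq> 0"
    using ncr rst q1(2) q2(2) unfolding no_common_root_def by auto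
  then show ?thesis using key q1(1) q2(1) by blast
qed


lemma tcubic_expand: "tcubic_eval F x y z = F 3 0 0 * x^3 + (F 2 1 0 * x^2*y + F 2 0 1 * x^2*z + F 1 2 0*x*y^2
   + F 1 1 1*x*y*z + F 1 0 2*x*z^2 + F 0 3 0*y^3 + F 0 2 1*y^2*z + F 0 1 2*y*z^2 + F 0 0 3*z^3)"
  by (simp add: tcubic_eval_def eval_nat_numeral algebra_simps)

lemma part_b:
  fixes v :: "'a::field \<Rightarrow> int"
  assumes nd: "normalised_dval v" and crit: "critical_tcubic v F"
  and eq: "tcubic_eval F x y z = 0" and nz: "(x,y,z) \<noteq> (0,0,0)"
  shows False
proof -
  from crit have h300: "veq v (F 3 0 0) 0" and h210: "vge v (F 2 1 0) 1" and h120: "vge v (F 1 2 0) 1"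
    and h030: "veq v (F 0 3 0) 1" and h201: "vge v (F 2 0 1) 1" and h111: "vge v (F 1 1 1) 1"
    and h021: "vge v (F 0 2 1) 2" and h102: "vge v (F 1 0 2) 2" and h012: "vge v (F 0 1 2) 2"
    and h003: "veq v (F 0 0 3) 2"
    unfolding critical_tcubic_def by auto
  have h300': "vge v (F 3 0 0) 0" and h030': "vge v (F 0 3 0) 1" and h003': "vge v (F 0 0 3) 2"
    using h300 h030 h003 by (auto intro: veq_vge)
  have n300: "F 3 0 0 \<noteq> 0" "v (F 3 0 0) = 0" and n030: "F 0 3 0 \<noteq> 0" "v (F 0 3 0) = 1"
    and n003: "F 0 0 3 \<noteq> 0" "v (F 0 0 3) = 2" using h300 h030 h003 unfolding veq_def by auto
  note vr = vge_add[OF nd] vge_diff[OF nd] vge_mult[OF nd] vge_pow[OF nd]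
  consider (X) "x \<noteq> 0" "vge v y (v x)" "vge v z (v x)"
    | (Y) "y \<noteq> 0" "vge v x (v y + 1)" "vge v z (v y)"
    | (Z) "z \<noteq> 0" "vge v x (v z + 1)" "vge v y (v z + 1)"
    using nz unfolding vge_def by force
  then show False
  proof cases
    case X
    define X where "X = v x"
    have hx: "vge v x X" unfolding X_def by (rule vge_self)
    have hy: "vge v y X" and hz: "vge v z X" using X X_def by simp_all
    have t: "F 3 0 0 * x^3 \<noteq> 0" using n300 X by simp
    have vt: "v (F 3 0 0 * x^3) = 3*X" using nd_pow[OF nd X(1), of 3] nd_mult[OF nd n300(1), of "x^3"] X X_def n300 by simp
    have r: "vge v (F 2 1 0 * x^2*y + F 2 0 1 * x^2*z + F 1 2 0*x*y^2
   + F 1 1 1*x*y*z + F 1 0 2*x*z^2 + F 0 3 0*y^3 + F 0 2 1*y^2*z + F 0 1 2*y*z^2 + F 0 0 3*z^3) (v (F 3 0 0 * x^3) + 1)"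
      unfolding vt by (insert h210 h120 h030' h201 h111 h021 h102 h012 h003' hx hy hz, (intro vr(1) vr(2))?, (rule vge_mono, (assumption | rule vr(3) vr(4))+, (simp add: algebra_simps; linarith))+)
    show False by (rule dominant[OF nd t r]) (use eq in \<open>simp add: tcubic_expand\<close>)
  next
    case Y
    define Y where "Y = v y"
    have hy: "vge v y Y" unfolding Y_def by (rule vge_self)
    have hx: "vge v x (Y+1)" and hz: "vge v z Y" using Y Y_def by simp_all
    have t: "F 0 3 0 * y^3 \<noteq> 0" using n030 Y by simp
    have vt: "v (F 0 3 0 * y^3) = 1 + 3*Y" using nd_pow[OF nd Y(1), of 3] nd_mult[OF nd n030(1), of "y^3"] Y Y_def n030 by simp
    have r: "vge v (F 3 0 0 * x^3 + F 2 1 0 * x^2*y + F 2 0 1 * x^2*z + F 1 2 0*x*y^2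
   + F 1 1 1*x*y*z + F 1 0 2*x*z^2 + F 0 2 1*y^2*z + F 0 1 2*y*z^2 + F 0 0 3*z^3) (v (F 0 3 0 * y^3) + 1)"
      unfolding vt by (insert h300' h210 h120 h201 h111 h021 h102 h012 h003' hx hy hz, (intro vr(1) vr(2))?, (rule vge_mono, (assumption | rule vr(3) vr(4))+, (simp add: algebra_simps; linarith))+)
    show False by (rule dominant[OF nd t r]) (use eq in \<open>simp add: tcubic_expand algebra_simps\<close>)
  next
    case Z
    define Z where "Z = v z"
    have hz: "vge v z Z" unfolding Z_def by (rule vge_self)
    have hx: "vge v x (Z+1)" and hy: "vge v y (Z+1)" using Z Z_def by simp_all
    have t: "F 0 0 3 * z^3 \<noteq> 0" using n003 Z by simp
    have vt: "v (F 0 0 3 * z^3) = 2 + 3*Z" using nd_pow[OF nd Z(1), of 3] nd_mult[OF nd n003(1), of "z^3"] Z Z_def n003 by simp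
    have r: "vge v (F 3 0 0 * x^3 + F 2 1 0 * x^2*y + F 2 0 1 * x^2*z + F 1 2 0*x*y^2
   + F 1 1 1*x*y*z + F 1 0 2*x*z^2 + F 0 3 0*y^3 + F 0 2 1*y^2*z + F 0 1 2*y*z^2) (v (F 0 0 3 * z^3) + 1)"
      unfolding vt by (insert h300' h210 h120 h030' h201 h111 h021 h102 h012 hx hy hz, (intro vr(1) vr(2))?, (rule vge_mono, (assumption | rule vr(3) vr(4))+, (simp add: algebra_simps; linarith))+)
    show False by (rule dominant[OF nd t r]) (use eq in \<open>simp add: tcubic_expand algebra_simps\<close>)
  qed
qed


lemma qform_expand: "qform_eval Q x = (Q 1 1 * (x 1)^2 + Q 1 2 * x 1 * x 2 + Q 2 2 * (x 2)^2)
   + (Q 1 3 * x 1 * x 3 + Q 1 4 * x 1 * x 4 + Q 2 3 * x 2 * x 3 + Q 2 4 * x 2 * x 4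
      + Q 3 3 * (x 3)^2 + Q 3 4 * x 3 * x 4 + Q 4 4 * (x 4)^2)"
  by (simp add: qform_eval_def eval_nat_numeral sum.atLeast_Suc_atMost algebra_simps power2_eq_square)

lemma qform_expand2: "qform_eval Q x = (Q 3 3 * (x 3)^2 + Q 3 4 * x 3 * x 4 + Q 4 4 * (x 4)^2)
   + (Q 1 1 * (x 1)^2 + Q 1 2 * x 1 * x 2 + Q 2 2 * (x 2)^2 + Q 1 3 * x 1 * x 3 + Q 1 4 * x 1 * x 4
      + Q 2 3 * x 2 * x 3 + Q 2 4 * x 2 * x 4)"
  by (simp add: qform_expand algebra_simps)

lemma caseA:
  fixes v :: "'a::field \<Rightarrow> int"
  assumes nd: "normalised_dval v"
    and hQ: "vge v (Q 1 3) 1" "vge v (Q 1 4) 1" "vge v (Q 2 3) 1" "vge v (Q 2 4) 1"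
       "vge v (Q 3 3) 1" "vge v (Q 3 4) 1" "vge v (Q 4 4) 1"
    and hx: "vge v (x 1) A" "vge v (x 2) A" "vge v (x 3) A" "vge v (x 4) A"
    and t: "Q 1 1 * (x 1)^2 + Q 1 2 * x 1 * x 2 + Q 2 2 * (x 2)^2 \<noteq> 0"
    and vt: "v (Q 1 1 * (x 1)^2 + Q 1 2 * x 1 * x 2 + Q 2 2 * (x 2)^2) = 2 * A"
  shows "qform_eval Q x \<noteq> 0"
proof
  assume eq: "qform_eval Q x = 0"
  note vr = vge_add[OF nd] vge_diff[OF nd] vge_mult[OF nd] vge_pow[OF nd]
  have r: "vge v (Q 1 3 * x 1 * x 3 + Q 1 4 * x 1 * x 4 + Q 2 3 * x 2 * x 3 + Q 2 4 * x 2 * x 4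
      + Q 3 3 * (x 3)^2 + Q 3 4 * x 3 * x 4 + Q 4 4 * (x 4)^2) (v (Q 1 1 * (x 1)^2 + Q 1 2 * x 1 * x 2 + Q 2 2 * (x 2)^2) + 1)"
    unfolding vt by (insert hQ hx, (intro vr(1) vr(2))?, (rule vge_mono, (assumption | rule vr(3) vr(4))+, (simp add: algebra_simps; linarith))+)
  show False by (rule dominant[OF nd t r]) (use eq in \<open>simp add: qform_expand\<close>)
qed

lemma caseB:
  fixes v :: "'a::field \<Rightarrow> int"
  assumes nd: "normalised_dval v" and pi: "v \<pi> = 1" "\<pi> \<noteq> 0"
    and hQ: "vge v (Q 1 1) 0" "vge v (Q 1 2) 0" "vge v (Q 2 2) 0"
       "vge v (Q 1 3) 1" "vge v (Q 1 4) 1" "vge v (Q 2 3) 1" "vge v (Q 2 4) 1"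
    and hx: "vge v (x 1) (B+1)" "vge v (x 2) (B+1)" "vge v (x 3) B" "vge v (x 4) B"
    and t: "qform_R \<pi> Q 3 3 * (x 3)^2 + qform_R \<pi> Q 3 4 * x 3 * x 4 + qform_R \<pi> Q 4 4 * (x 4)^2 \<noteq> 0"
    and vt: "v (qform_R \<pi> Q 3 3 * (x 3)^2 + qform_R \<pi> Q 3 4 * x 3 * x 4 + qform_R \<pi> Q 4 4 * (x 4)^2) = 2 * B"
  shows "qform_eval Q x \<noteq> 0"
proof
  assume eq: "qform_eval Q x = 0"
  note vr = vge_add[OF nd] vge_diff[OF nd] vge_mult[OF nd] vge_pow[OF nd]
  let ?q = "qform_R \<pi> Q 3 3 * (x 3)^2 + qform_R \<pi> Q 3 4 * x 3 * x 4 + qform_R \<pi> Q 4 4 * (x 4)^2"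
  have e: "Q 3 3 * (x 3)^2 + Q 3 4 * x 3 * x 4 + Q 4 4 * (x 4)^2 = \<pi> * ?q"
    using pi(2) by (simp add: qform_R_def algebra_simps)
  have t': "\<pi> * ?q \<noteq> 0" using t pi by simp
  have vt': "v (\<pi> * ?q) = 1 + 2*B" using nd_mult[OF nd pi(2) t] pi vt by simp
  have r: "vge v (Q 1 1 * (x 1)^2 + Q 1 2 * x 1 * x 2 + Q 2 2 * (x 2)^2 + Q 1 3 * x 1 * x 3 + Q 1 4 * x 1 * x 4
      + Q 2 3 * x 2 * x 3 + Q 2 4 * x 2 * x 4) (v (\<pi> * ?q) + 1)"
    unfolding vt' by (insert hQ hx, (intro vr(1) vr(2))?, (rule vge_mono, (assumption | rule vr(3) vr(4))+, (simp add: algebra_simps; linarith))+)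
  show False by (rule dominant[OF nd t' r]) (use eq e in \<open>simp add: qform_expand2\<close>)
qed


lemma all10: "(\<forall>i\<in>{1..4::nat}. \<forall>j\<in>{i..4}. R i j) \<Longrightarrow>
  R 1 1 \<and> R 1 2 \<and> R 1 3 \<and> R 1 4 \<and> R 2 2 \<and> R 2 3 \<and> R 2 4 \<and> R 3 3 \<and> R 3 4 \<and> R 4 4"
  by auto

lemma min_cases:
  fixes v :: "'a::field \<Rightarrow> int" and x :: "nat \<Rightarrow> 'a"
  assumes "\<exists>i\<in>{1..4}. x i \<noteq> 0"
  obtains M u where "u \<noteq> 0" "u = x 1 \<or> u = x 2" "v u = M" "\<And>i. i \<in> {1..4} \<Longrightarrow> vge v (x i) M"
    | M u where "u \<noteq> 0" "u = x 3 \<or> u = x 4" "v u = M" "vge v (x 3) M" "vge v (x 4) M"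
       "vge v (x 1) (M+1)" "vge v (x 2) (M+1)"
proof -
  define S where "S = (\<lambda>i. v (x i)) ` {i\<in>{1..4}. x i \<noteq> 0}"
  have fin: "finite S" unfolding S_def by simp
  have ne: "S \<noteq> {}" using assms unfolding S_def by auto
  define M where "M = Min S"
  have le: "\<And>i. i \<in> {1..4} \<Longrightarrow> vge v (x i) M"
    unfolding vge_def M_def S_def using fin by (auto intro: Min_le simp: S_def)
  have "M \<in> S" unfolding M_def using fin ne by simp
  then obtain i0 where i0: "i0 \<in> {1..4}" "x i0 \<noteq> 0" "v (x i0) = M" unfolding S_def by auto
  show ?thesis
  proof (cases "\<exists>i\<in>{1,2}. x i \<noteq> 0 \<and> v (x i) = M")
    case True
    then obtain i where "i \<in> {1,2}" "x i \<noteq> 0" "v (x i) = M" by blast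
    then show ?thesis using that(1)[of "x i" M] le by auto
  next
    case False
    have "i0 \<noteq> 1" "i0 \<noteq> 2" using i0 False by auto
    then have i34: "i0 = 3 \<or> i0 = 4" using i0(1) by auto
    have "vge v (x 1) (M+1)" "vge v (x 2) (M+1)"
      using le[of 1] le[of 2] False unfolding vge_def by auto
    then show ?thesis using that(2)[of "x i0" M] le[of 3] le[of 4] i0 i34 by auto
  qed
qed

lemma part_c:
  fixes v :: "'a::field \<Rightarrow> int" and red :: "'a \<Rightarrow> 'k::alg_closed_field"
  assumes nd: "normalised_dval v" and re: "residue_embedding v red" and pi: "v \<pi> = 1" "\<pi> \<noteq> 0"
    and crit: "critical_qpair v \<pi> red Q1 Q2"
    and nz: "\<exists>i\<in>{1..4}. x i \<noteq> 0" and eq1: "qform_eval Q1 x = 0" and eq2: "qform_eval Q2 x = 0"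
  shows False
proof -
  from crit have c1: "\<forall>i\<in>{1..4}. \<forall>j\<in>{i..4}. vge v (Q1 i j) 0 \<and> vge v (Q2 i j) 0"
    and c2: "\<forall>i\<in>{1..4}. \<forall>j\<in>{i..4}. 3 \<le> j \<longrightarrow> vge v (Q1 i j) 1 \<and> vge v (Q2 i j) 1"
    and n1: "no_common_root (red (Q1 1 1)) (red (Q1 1 2)) (red (Q1 2 2))
                    (red (Q2 1 1)) (red (Q2 1 2)) (red (Q2 2 2))"
    and c4: "\<forall>i\<in>{1..4}. \<forall>j\<in>{i..4}. vge v (qform_R \<pi> Q1 i j) 0 \<and> vge v (qform_R \<pi> Q2 i j) 0"
    and n2: "no_common_root (red (qform_R \<pi> Q1 3 3)) (red (qform_R \<pi> Q1 3 4)) (red (qform_R \<pi> Q1 4 4))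
                    (red (qform_R \<pi> Q2 3 3)) (red (qform_R \<pi> Q2 3 4)) (red (qform_R \<pi> Q2 4 4))"
    unfolding critical_qpair_def by auto
  note f1 = all10[OF c1] and f2 = all10[OF c2] and f4 = all10[OF c4]
  from nz show False
  proof (cases rule: min_cases[where v = v])
    case (1 M u)
    have hx: "vge v (x 1) (v u)" "vge v (x 2) (v u)" "vge v (x 3) (v u)" "vge v (x 4) (v u)"
      using 1 by auto
    from bin_lemma[OF nd re _ _ _ _ _ _ n1 1(1) 1(2) hx(1) hx(2)] f1
    have "(Q1 1 1 * (x 1)^2 + Q1 1 2 * x 1 * x 2 + Q1 2 2 * (x 2)^2 \<noteq> 0 \<and>
           v (Q1 1 1 * (x 1)^2 + Q1 1 2 * x 1 * x 2 + Q1 2 2 * (x 2)^2) = 2 * v u) \<or>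
          (Q2 1 1 * (x 1)^2 + Q2 1 2 * x 1 * x 2 + Q2 2 2 * (x 2)^2 \<noteq> 0 \<and>
           v (Q2 1 1 * (x 1)^2 + Q2 1 2 * x 1 * x 2 + Q2 2 2 * (x 2)^2) = 2 * v u)" by auto
    then show False
    proof
      assume a: "Q1 1 1 * (x 1)^2 + Q1 1 2 * x 1 * x 2 + Q1 2 2 * (x 2)^2 \<noteq> 0 \<and>
           v (Q1 1 1 * (x 1)^2 + Q1 1 2 * x 1 * x 2 + Q1 2 2 * (x 2)^2) = 2 * v u"
      show False using caseA[OF nd _ _ _ _ _ _ _ hx conjunct1[OF a] conjunct2[OF a]] f2 eq1 by simp
    next
      assume a: "Q2 1 1 * (x 1)^2 + Q2 1 2 * x 1 * x 2 + Q2 2 2 * (x 2)^2 \<noteq> 0 \<and>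
           v (Q2 1 1 * (x 1)^2 + Q2 1 2 * x 1 * x 2 + Q2 2 2 * (x 2)^2) = 2 * v u"
      show False using caseA[OF nd _ _ _ _ _ _ _ hx conjunct1[OF a] conjunct2[OF a]] f2 eq2 by simp
    qed
  next
    case (2 M u)
    have hx: "vge v (x 1) (v u + 1)" "vge v (x 2) (v u + 1)" "vge v (x 3) (v u)" "vge v (x 4) (v u)"
      using 2 by auto
    let ?R1 = "qform_R \<pi> Q1" and ?R2 = "qform_R \<pi> Q2"
    from bin_lemma[OF nd re _ _ _ _ _ _ n2 2(1) 2(2) hx(3) hx(4)] f4
    have "(?R1 3 3 * (x 3)^2 + ?R1 3 4 * x 3 * x 4 + ?R1 4 4 * (x 4)^2 \<noteq> 0 \<and>
           v (?R1 3 3 * (x 3)^2 + ?R1 3 4 * x 3 * x 4 + ?R1 4 4 * (x 4)^2) = 2 * v u) \<or>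
          (?R2 3 3 * (x 3)^2 + ?R2 3 4 * x 3 * x 4 + ?R2 4 4 * (x 4)^2 \<noteq> 0 \<and>
           v (?R2 3 3 * (x 3)^2 + ?R2 3 4 * x 3 * x 4 + ?R2 4 4 * (x 4)^2) = 2 * v u)" by auto
    then show False
    proof
      assume a: "?R1 3 3 * (x 3)^2 + ?R1 3 4 * x 3 * x 4 + ?R1 4 4 * (x 4)^2 \<noteq> 0 \<and>
           v (?R1 3 3 * (x 3)^2 + ?R1 3 4 * x 3 * x 4 + ?R1 4 4 * (x 4)^2) = 2 * v u"
      show False using caseB[OF nd pi _ _ _ _ _ _ _ hx conjunct1[OF a] conjunct2[OF a]] f1 f2 eq1 by simp
    next
      assume a: "?R2 3 3 * (x 3)^2 + ?R2 3 4 * x 3 * x 4 + ?R2 4 4 * (x 4)^2 \<noteq> 0 \<and>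
           v (?R2 3 3 * (x 3)^2 + ?R2 3 4 * x 3 * x 4 + ?R2 4 4 * (x 4)^2) = 2 * v u"
      show False using caseB[OF nd pi _ _ _ _ _ _ _ hx conjunct1[OF a] conjunct2[OF a]] f1 f2 eq2 by simp
    qed
  qed
qed

theorem lemma5p2:
  fixes v :: "'a::field \<Rightarrow> int" and \<pi> :: 'a and red :: "'a \<Rightarrow> 'k::alg_closed_field"
  assumes "normalised_dval v"
    and "perfect_residue_field v"
    and "v \<pi> = 1" and "\<pi> \<noteq> 0"
    and "residue_embedding v red"
  shows "(\<forall>l m n a b c d e. critical_gbq v l m n a b c d e \<longrightarrow> \<not> gbq_soluble l m n a b c d e) \<and>
         (\<forall>F. critical_tcubic v F \<longrightarrow> \<not> tcubic_soluble F) \<and>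
         (\<forall>Q1 Q2. critical_qpair v \<pi> red Q1 Q2 \<longrightarrow> \<not> qpair_soluble Q1 Q2)"
  using part_a[OF assms(1)] part_b[OF assms(1)] part_c[OF assms(1) assms(5) assms(3) assms(4)]
  unfolding gbq_soluble_def tcubic_soluble_def qpair_soluble_def by blast

end
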